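(* Let $k=2$, $\lambda>0$ and $0<\theta<1$, and $F(x,y,\theta)=\frac{1+x+\theta y}{1+x+y}$. If either $\theta\ge1/3$, or $\theta<1/3$ and $\lambda\le\frac{9}{4(1-3\theta)}$, then the system $$z^-_1=\lambda F(z^-_1,z^+_2,\theta)^2,\ z^+_1=\lambda F(z^+_1,z^-_2,\theta)^2,\ z^-_2=\lambda F(z^-_2,z^+_1,\theta)^2,\ z^+_2=\lambda F(z^+_2,z^-_1,\theta)^2$$ has the unique solution $(x^*,x^*,x^*,x^* )$ in $(0,\infty)^4$, where $x^*$ is the unique positive solution of $x=\lambda\bigl(\frac{1+(1+\theta)x}{1+2x}\bigr)^2$. *)

theory Defs
  imports Complex_Main
begin

definition F :: "real \<Rightarrow> real \<Rightarrow> real \<Rightarrow> real" where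
  "F x y th = (1 + x + th * y) / (1 + x + y)"

end

theory Submission
  imports Defs
begin

lemma key_uv:
  fixes u v r th :: real
  assumes u: "u > 0" and v: "v > 0" and r: "r > 0" and th0: "0 < th" and th1: "th < 1"
    and cond: "th \<ge> 1/3 \<or> (th < 1/3 \<and> r^2 \<le> 9 / (4 * (1 - 3 * th)))"
    and e1: "u * (1 + u^2 + v^2) = r * (1 + u^2 + th * v^2)"
    and e2: "v * (1 + u^2 + v^2) = r * (1 + v^2 + th * u^2)"
  shows "u = v"
proof (rule ccontr)
  assume ne: "u \<noteq> v"
  have "(u - v) * (1 + u^2 + v^2) = r * (1 - th) * (u - v) * (u + v)"
    using e1 e2 by (simp add: algebra_simps power2_eq_square)
  hence A: "1 + u^2 + v^2 = r * (1 - th) * (u + v)" using ne by simp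
  have B: "(u + v) * (1 + u^2 + v^2) = r * (2 + (1 + th) * (u^2 + v^2))"
    using e1 e2 by (simp add: algebra_simps)
  have "r * ((1 - th) * (u + v)^2) = (u + v) * (1 + u^2 + v^2)"
    unfolding A by (simp add: algebra_simps power2_eq_square)
  hence "r * ((1 - th) * (u + v)^2) = r * (2 + (1 + th) * (u^2 + v^2))"
    using B by simp
  hence C: "(1 - th) * (u + v)^2 = 2 + (1 + th) * (u^2 + v^2)" using r by simp
  hence C': "(1 - th) * (u*v) - th * (u^2 + v^2) = 1"
    by (simp add: algebra_simps power2_eq_square)
  have sq: "(u - v)^2 > 0" using ne by simp
  show False
  proof (cases "th \<ge> 1/3")
    case True
    have "th * (u^2 + v^2) \<ge> th * (2 * u * v)"
      using sq th0 by (intro mult_left_mono) (auto simp: power2_eq_square algebra_simps)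
    moreover have "(1 - 3*th) * (u*v) \<le> 0"
      using True u v by (intro mult_nonpos_nonneg) auto
    ultimately show False using C' by (simp add: algebra_simps)
  next
    case False
    define c where "c = 1 - 3 * th"
    have c0: "0 < c" "c < 1" using False th0 unfolding c_def by auto
    have lam: "r^2 \<le> 9 / (4 * c)" using cond False unfolding c_def by auto
    define p where "p = u + v"
    define q where "q = u * v"
    have p0: "p > 0" using u v p_def by simp
    have s: "u^2 + v^2 = p^2 - 2*q" unfolding p_def q_def by (simp add: power2_eq_square algebra_simps)
    have D: "th * p^2 = (1 + th) * q - 1" using C' s unfolding q_def by (simp add: algebra_simps)
    have E: "p^2 > 4 * q" using sq unfolding p_def q_def by (simp add: power2_eq_square algebra_simps)
    have "(1 + th) * p^2 > 4 * th * p^2 + 4"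
    proof -
      have "(1 + th) * p^2 > (1 + th) * (4 * q)" using E th0 by simp
      thus ?thesis using D by (simp add: algebra_simps)
    qed
    hence F1: "c * p^2 > 4" unfolding c_def by (simp add: algebra_simps)
    have G: "r * (1 - th) * p = 1 + p^2 - 2 * q" using A s p_def by simp
    have D': "th * p^2 = q + th * q - 1" using D by (simp add: algebra_simps)
    have L1: "(1 + th) * (1 + p^2 - 2 * q) = 1 + p^2 - 2*q + th + th*p^2 - 2*(th*q)"
      by (simp add: algebra_simps)
    have L2: "(1 - th) * (p^2 - 1) = p^2 - 1 - th*p^2 + th" by (simp add: algebra_simps)
    have "(1 + th) * (r * (1 - th) * p) = (1 - th) * (p^2 - 1)"
      unfolding G L1 L2 using D' by linarith
    hence "(1 - th) * (r * (1 + th) * p) = (1 - th) * (p^2 - 1)" by (simp add: algebra_simps)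
    hence H: "r * (1 + th) * p = p^2 - 1" using th1 by simp
    have t1: "1 + th = (4 - c) / 3" unfolding c_def by simp
    have pos: "(c * p^2 - 4) * (4 * p^2 - c) > 0"
    proof -
      have "c * p^2 \<le> 1 * p^2" using c0 by (intro mult_right_mono) auto
      hence "4 * p^2 - c > 0" using F1 c0 by linarith
      thus ?thesis using F1 by simp
    qed
    have M1: "4 * c * (p^2 - 1)^2 > (4 - c)^2 * p^2"
      using pos by (simp add: algebra_simps power2_eq_square)
    have E4: "4 - c = 3 * (1 + th)" unfolding c_def by simp
    have "(4 - c)^2 * p^2 = (3 * (1 + th))^2 * p^2" by (simp only: E4)
    also have "\<dots> = 9 * ((1 + th) * p)^2" by (simp add: power2_eq_square algebra_simps)
    finally have M2: "(4 - c)^2 * p^2 = 9 * ((1 + th) * p)^2" .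
    have M3: "(p^2 - 1)^2 = r^2 * ((1 + th) * p)^2"
      unfolding H[symmetric] by (simp add: power_mult_distrib)
    have M4: "(4 * c * r^2) * ((1 + th) * p)^2 > 9 * ((1 + th) * p)^2"
      using M1 unfolding M2 M3 by (simp add: algebra_simps)
    have X: "((1 + th) * p)^2 > 0" using p0 th0 by simp
    have M5: "4 * c * r^2 > 9"
      using M4 mult_less_cancel_right_pos[OF X, of 9 "4 * c * r^2"] by simp
    have "4 * c * r^2 \<le> 9" using lam c0 by (simp add: field_simps)
    with M5 show False by simp
  qed
qed

lemma key_ab:
  fixes a b lam th :: real
  assumes a: "a > 0" and b: "b > 0" and l: "lam > 0" and th0: "0 < th" and th1: "th < 1"
    and cond: "th \<ge> 1/3 \<or> (th < 1/3 \<and> lam \<le> 9 / (4 * (1 - 3 * th)))"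
    and e1: "a = lam * (F a b th)^2" and e2: "b = lam * (F b a th)^2"
  shows "a = b"
proof -
  define u where "u = sqrt a"
  define v where "v = sqrt b"
  define r where "r = sqrt lam"
  have u: "u > 0" "u^2 = a" using a u_def by auto
  have v: "v > 0" "v^2 = b" using b v_def by auto
  have r: "r > 0" "r^2 = lam" using l r_def by auto
  have d: "1 + a + b > 0" using a b by simp
  have "th * b > 0" "th * a > 0" using a b th0 by auto
  hence F1: "F a b th > 0" and F2: "F b a th > 0" using a b unfolding F_def by (auto intro!: divide_pos_pos)
  have "sqrt a = sqrt (lam * (F a b th)^2)" using e1 by (rule arg_cong)
  hence "u = r * F a b th"
    using F1 unfolding u_def r_def by (simp add: real_sqrt_mult)
  hence "u * (1 + a + b) = r * (1 + a + th * b)" using d unfolding F_def by (simp add: field_simps)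
  hence e1': "u * (1 + u^2 + v^2) = r * (1 + u^2 + th * v^2)" using u v by simp
  have "sqrt b = sqrt (lam * (F b a th)^2)" using e2 by (rule arg_cong)
  hence "v = r * F b a th"
    using F2 unfolding v_def r_def by (simp add: real_sqrt_mult)
  hence "v * (1 + b + a) = r * (1 + b + th * a)" using d unfolding F_def by (simp add: field_simps add.commute)
  hence e2': "v * (1 + u^2 + v^2) = r * (1 + v^2 + th * u^2)" using u v by (simp add: algebra_simps)
  have "u = v" using key_uv[OF u(1) v(1) r(1) th0 th1 _ e1' e2'] cond r by simp
  thus ?thesis using u v by metis
qed

theorem mainTheorem15:
  fixes lam th :: real
  assumes "lam > 0" and "0 < th" and "th < 1"
    and "th \<ge> 1/3 \<or> (th < 1/3 \<and> lam \<le> 9 / (4 * (1 - 3 * th)))"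
  shows "\<exists>xs::real. xs > 0 \<and> xs = lam * ((1 + (1 + th) * xs) / (1 + 2 * xs))^2
     \<and> (\<forall>x>0. x = lam * ((1 + (1 + th) * x) / (1 + 2 * x))^2 \<longrightarrow> x = xs)
     \<and> {(zm1, zp1, zm2, zp2).
          (zm1::real) > 0 \<and> zp1 > 0 \<and> zm2 > 0 \<and> zp2 > 0 \<and>
          zm1 = lam * (F zm1 zp2 th)^2 \<and> zp1 = lam * (F zp1 zm2 th)^2 \<and>
          zm2 = lam * (F zm2 zp1 th)^2 \<and> zp2 = lam * (F zp2 zm1 th)^2}
       = {(xs, xs, xs, xs)}"
proof -
  define h where "h x = (1 + (1 + th) * x) / (1 + 2 * x)" for x :: real
  define g where "g x = lam * (h x)^2 - x" for x :: real
  have hle: "h x \<le> 1" if "x \<ge> 0" for x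
    using that assms(3) mult_right_mono[of th 1 x] unfolding h_def by (simp add: field_simps)
  have hpos: "h x > 0" if "x \<ge> 0" for x
  proof -
    have "0 \<le> (1 + th) * x" using that assms(2) by simp
    thus ?thesis using that unfolding h_def by (intro divide_pos_pos) auto
  qed
  have hmono: "h y \<le> h x" if "0 \<le> x" "x \<le> y" for x y
  proof -
    have "(1 + (1 + th) * y) * (1 + 2 * x) \<le> (1 + (1 + th) * x) * (1 + 2 * y)"
    proof -
      have "(1 + (1 + th) * x) * (1 + 2 * y) - (1 + (1 + th) * y) * (1 + 2 * x) = (1 - th) * (y - x)"
        by (simp add: algebra_simps)
      moreover have "(1 - th) * (y - x) \<ge> 0" using that assms(3) by simp
      ultimately show ?thesis by linarith
    qed
    thus ?thesis unfolding h_def using that by (simp add: divide_simps)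
  qed
  have cont: "isCont g x" if "0 \<le> x" for x
    unfolding g_def h_def using that by (intro continuous_intros) auto
  have "g lam \<le> 0"
  proof -
    have "(h lam)^2 \<le> 1" using hle[of lam] hpos[of lam] assms(1)
      by (simp add: abs_le_square_iff power_le_one)
    thus ?thesis unfolding g_def using assms(1) by (smt (verit) mult_left_le)
  qed
  moreover have "0 \<le> g 0" unfolding g_def h_def using assms(1) by simp
  ultimately obtain xs where xs: "0 \<le> xs" "xs \<le> lam" "g xs = 0"
    using IVT2[of g lam 0 0] cont assms(1) by auto
  have xs0: "xs > 0" using xs assms(1) unfolding g_def h_def by (cases "xs = 0") auto
  have xseq: "xs = lam * ((1 + (1 + th) * xs) / (1 + 2 * xs))^2"
    using xs(3) unfolding g_def h_def by simp
  have uniq: "x = xs" if "x > 0" "x = lam * ((1 + (1 + th) * x) / (1 + 2 * x))^2" for x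
  proof -
    have fx: "x = lam * (h x)^2" using that unfolding h_def by simp
    have fy: "xs = lam * (h xs)^2" using xseq unfolding h_def by simp
    have *: False if "0 \<le> x1" "x1 < x2" "x1 = lam * (h x1)^2" "x2 = lam * (h x2)^2" for x1 x2
    proof -
      have "h x2 \<le> h x1" using hmono that by simp
      moreover have "h x2 > 0" using hpos that by simp
      ultimately have "(h x2)^2 \<le> (h x1)^2" by (simp add: power_mono)
      hence "lam * (h x2)^2 \<le> lam * (h x1)^2" using assms(1) by simp
      thus False using that by simp
    qed
    show ?thesis using *[of x xs] *[of xs x] fx fy that xs0 by (cases "x < xs"; cases "xs < x") auto
  qed
  have Fxx: "F x x th = (1 + (1 + th) * x) / (1 + 2 * x)" for x
    unfolding F_def by (simp add: algebra_simps)
  show ?thesis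
  proof (intro exI[of _ xs] conjI allI impI)
    show "xs > 0" by (rule xs0)
    show "xs = lam * ((1 + (1 + th) * xs) / (1 + 2 * xs))^2" by (rule xseq)
    show "x = xs" if "x > 0" "x = lam * ((1 + (1 + th) * x) / (1 + 2 * x))^2" for x
      using uniq that by simp
    show "{(zm1, zp1, zm2, zp2).
          (zm1::real) > 0 \<and> zp1 > 0 \<and> zm2 > 0 \<and> zp2 > 0 \<and>
          zm1 = lam * (F zm1 zp2 th)^2 \<and> zp1 = lam * (F zp1 zm2 th)^2 \<and>
          zm2 = lam * (F zm2 zp1 th)^2 \<and> zp2 = lam * (F zp2 zm1 th)^2}
       = {(xs, xs, xs, xs)}"
    proof (rule set_eqI, clarify)
      fix zm1 zp1 zm2 zp2 :: real
      show "((zm1, zp1, zm2, zp2) \<in> {(zm1, zp1, zm2, zp2).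
          (zm1::real) > 0 \<and> zp1 > 0 \<and> zm2 > 0 \<and> zp2 > 0 \<and>
          zm1 = lam * (F zm1 zp2 th)^2 \<and> zp1 = lam * (F zp1 zm2 th)^2 \<and>
          zm2 = lam * (F zm2 zp1 th)^2 \<and> zp2 = lam * (F zp2 zm1 th)^2}) =
          ((zm1, zp1, zm2, zp2) \<in> {(xs, xs, xs, xs)})"
      proof
        assume H: "(zm1, zp1, zm2, zp2) \<in> {(zm1, zp1, zm2, zp2).
          (zm1::real) > 0 \<and> zp1 > 0 \<and> zm2 > 0 \<and> zp2 > 0 \<and>
          zm1 = lam * (F zm1 zp2 th)^2 \<and> zp1 = lam * (F zp1 zm2 th)^2 \<and>
          zm2 = lam * (F zm2 zp1 th)^2 \<and> zp2 = lam * (F zp2 zm1 th)^2}"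
        hence h: "zm1 > 0" "zp1 > 0" "zm2 > 0" "zp2 > 0"
          "zm1 = lam * (F zm1 zp2 th)^2" "zp1 = lam * (F zp1 zm2 th)^2"
          "zm2 = lam * (F zm2 zp1 th)^2" "zp2 = lam * (F zp2 zm1 th)^2" by auto
        have a: "zm1 = zp2" using key_ab[OF h(1) h(4) assms h(5) h(8)] .
        have b: "zp1 = zm2" using key_ab[OF h(2) h(3) assms h(6) h(7)] .
        have "zm1 = xs" using uniq[of zm1] h(1) h(5) a Fxx by simp
        moreover have "zp1 = xs" using uniq[of zp1] h(2) h(6) b Fxx by simp
        ultimately show "(zm1, zp1, zm2, zp2) \<in> {(xs, xs, xs, xs)}" using a b by simp
      next
        assume "(zm1, zp1, zm2, zp2) \<in> {(xs, xs, xs, xs)}"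
        thus "(zm1, zp1, zm2, zp2) \<in> {(zm1, zp1, zm2, zp2).
          (zm1::real) > 0 \<and> zp1 > 0 \<and> zm2 > 0 \<and> zp2 > 0 \<and>
          zm1 = lam * (F zm1 zp2 th)^2 \<and> zp1 = lam * (F zp1 zm2 th)^2 \<and>
          zm2 = lam * (F zm2 zp1 th)^2 \<and> zp2 = lam * (F zp2 zm1 th)^2}"
          using xs0 xseq Fxx by simp
      qed
    qed
  qed
qed

end
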